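(* Let $f(\mathbf{x})=\mathbf{x}^{T}A\mathbf{x}+b^{T}\mathbf{x}+1$ with $A\in\mathbb{R}^{n\times n}$ symmetric and $b\in\mathbb{R}^n$. If $A_1,\dots,A_n$ and $B_1,\dots,B_n$ are real symmetric $2\times 2$ matrices with $f(\mathbf{x})=\det(I_2+\sum_j x_jA_j)=\det(I_2+\sum_j x_jB_j)$ for all $\mathbf{x}\in\mathbb{R}^n$, then there exists a real orthogonal $2\times 2$ matrix $V$ with $V^{T}A_jV=B_j$ for all $j=1,\dots,n$. *)

theory Defs
  imports "HOL-Analysis.Analysis"
begin

end

theory Submission
  imports Defs
begin

lemma sym2: "transpose (M::real^2^2) = M \<Longrightarrow> M$2$1 = M$1$2"
  proof -
  assume "transpose M = M"
  moreover have "transpose M $1$2 = M$2$1" by (simp add: transpose_def)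
  ultimately show ?thesis by simp
qed

lemma detform:
  fixes M :: "'n::finite \<Rightarrow> real^2^2"
  assumes "\<And>j. transpose (M j) = M j"
  shows "det (mat 1 + (\<Sum>j\<in>UNIV. x $ j *\<^sub>R M j)) =
     (1 + (\<Sum>j\<in>UNIV. x$j * M j$1$1)) * (1 + (\<Sum>j\<in>UNIV. x$j * M j$2$2)) - (\<Sum>j\<in>UNIV. x$j * M j$1$2)^2"
  using sym2[OF assms] by (simp add: det_2 mat_def power2_eq_square)

lemma rotconj:
  fixes M N :: "real^2^2"
  assumes "transpose M = M" "transpose N = N" "u^2+w^2 = 1"
    "N$1$1 + N$2$2 = M$1$1+M$2$2"
    "N$1$1 - N$2$2 = (u^2-w^2)*(M$1$1 - M$2$2) + 2*u*w*(2*(M$1$2))"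
    "2*(N$1$2) = -2*u*w*(M$1$1 - M$2$2) + (u^2-w^2)*(2*(M$1$2))"
  shows "transpose (vector[vector[u,-w],vector[w,u]]) ** M ** (vector[vector[u,-w],vector[w,u]]) = N"
  using assms sym2[OF assms(1)] sym2[OF assms(2)]
  apply (simp add: vec_eq_iff forall_2 matrix_matrix_mult_def sum_2 transpose_def)
  apply algebra
  done

lemma refconj:
  fixes M N :: "real^2^2"
  assumes "transpose M = M" "transpose N = N" "u^2+w^2 = 1"
    "N$1$1 + N$2$2 = M$1$1+M$2$2"
    "N$1$1 - N$2$2 = (u^2-w^2)*(M$1$1 - M$2$2) + 2*u*w*(2*(M$1$2))"
    "2*(N$1$2) = 2*u*w*(M$1$1 - M$2$2) - (u^2-w^2)*(2*(M$1$2))"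
  shows "transpose (vector[vector[u,w],vector[w,-u]]) ** M ** (vector[vector[u,w],vector[w,-u]]) = N"
  using assms sym2[OF assms(1)] sym2[OF assms(2)]
  apply (simp add: vec_eq_iff forall_2 matrix_matrix_mult_def sum_2 transpose_def)
  apply algebra
  done

lemma orth1: "u^2+w^2 = (1::real) \<Longrightarrow> orthogonal_matrix (vector[vector[u,-w],vector[w,u]] :: real^2^2)"
  by (simp add: orthogonal_matrix_def vec_eq_iff forall_2 matrix_matrix_mult_def sum_2 transpose_def mat_def power2_eq_square)
lemma orth2: "u^2+w^2 = (1::real) \<Longrightarrow> orthogonal_matrix (vector[vector[u,w],vector[w,-u]] :: real^2^2)"
  by (simp add: orthogonal_matrix_def vec_eq_iff forall_2 matrix_matrix_mult_def sum_2 transpose_def mat_def power2_eq_square)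
lemma gram2:
  fixes a b a2 b2 :: "'n \<Rightarrow> real"
  assumes G: "\<And>j k. a j * a k + b j * b k = a2 j * a2 k + b2 j * b2 k"
  shows "\<exists>C S. C^2 + S^2 = 1 \<and>
     ((\<forall>j. a2 j = C * a j - S * b j \<and> b2 j = S * a j + C * b j) \<or>
      (\<forall>j. a2 j = C * a j + S * b j \<and> b2 j = S * a j - C * b j))"
proof (cases "\<forall>j. a j = 0 \<and> b j = 0")
  case True
  have "a2 j = 0 \<and> b2 j = 0" for j
  proof -
    have "a2 j * a2 j + b2 j * b2 j = 0" using G[of j j] True by simp
    then show ?thesis by (simp add: sum_squares_eq_zero_iff)
  qed
  then show ?thesis using True by (intro exI[of _ 1] exI[of _ 0]) auto
next
  case False
  then obtain i where i: "a i \<noteq> 0 \<or> b i \<noteq> 0" by blast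
  define N where "N = a i * a i + b i * b i"
  have Npos: "N > 0" unfolding N_def using i
    by (simp add: sum_squares_gt_zero_iff)
  have N2: "N = a2 i * a2 i + b2 i * b2 i" unfolding N_def using G[of i i] .
  define d where "d j = a j * a i + b j * b i" for j
  define x where "x j = a j * b i - b j * a i" for j
  define x2 where "x2 j = a2 j * b2 i - b2 j * a2 i" for j
  have d2: "d j = a2 j * a2 i + b2 j * b2 i" for j unfolding d_def using G[of j i] .
  have xsq: "x j ^ 2 = (a j * a j + b j * b j) * N - d j ^ 2" for j
    unfolding x_def d_def N_def by algebra
  have x2sq: "x2 j ^ 2 = (a j * a j + b j * b j) * N - d j ^ 2" for j
    unfolding x2_def d2 N2 G[of j j] by algebra
  have pm: "x2 j = x j \<or> x2 j = - x j" for j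
    using xsq[of j] x2sq[of j] by (metis power2_eq_iff)
  have dot: "N * (a j * a k + b j * b k) = d j * d k + x j * x k" for j k
    unfolding x_def d_def N_def by algebra
  have dot2: "N * (a j * a k + b j * b k) = d j * d k + x2 j * x2 k" for j k
    unfolding x2_def d2 N2 G[of j k] by algebra
  show ?thesis
  proof (cases "\<forall>j. x2 j = x j")
    case True
    define C where "C = (a i * a2 i + b i * b2 i) / N"
    define S where "S = (a i * b2 i - b i * a2 i) / N"
    have "C^2 + S^2 = 1"
    proof -
      have "(a i * a2 i + b i * b2 i)^2 + (a i * b2 i - b i * a2 i)^2 = N * N"
        using N_def N2 by algebra
      then show ?thesis using Npos unfolding C_def S_def
        by (simp add: power_divide add_divide_distrib[symmetric] power2_eq_square)
    qed
    moreover have "a2 j = C * a j - S * b j \<and> b2 j = S * a j + C * b j" for j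
    proof -
      have xx: "x2 j = x j" using True by blast
      have e1: "a2 j * N = (a i * a2 i + b i * b2 i) * a j - (a i * b2 i - b i * a2 i) * b j"
        using xx G[of j i] unfolding x2_def x_def N2 by algebra
      have e2: "b2 j * N = (a i * b2 i - b i * a2 i) * a j + (a i * a2 i + b i * b2 i) * b j"
        using xx G[of j i] unfolding x2_def x_def N2 by algebra
      have f1: "a2 j = ((a i * a2 i + b i * b2 i) * a j - (a i * b2 i - b i * a2 i) * b j) / N"
        using e1 Npos by (simp add: eq_divide_eq)
      have f2: "b2 j = ((a i * b2 i - b i * a2 i) * a j + (a i * a2 i + b i * b2 i) * b j) / N"
        using e2 Npos by (simp add: eq_divide_eq)
      show ?thesis unfolding f1 f2 C_def S_def using Npos by (simp add: field_simps)
    qed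
    ultimately show ?thesis by blast
  next
    case F1: False
    show ?thesis
    proof (cases "\<forall>j. x2 j = - x j")
      case True
      define C where "C = (a i * a2 i - b i * b2 i) / N"
      define S where "S = (b i * a2 i + a i * b2 i) / N"
      have "C^2 + S^2 = 1"
      proof -
        have "(a i * a2 i - b i * b2 i)^2 + (b i * a2 i + a i * b2 i)^2 = N * N"
          using N_def N2 by algebra
        then show ?thesis using Npos unfolding C_def S_def
          by (simp add: power_divide add_divide_distrib[symmetric] power2_eq_square)
      qed
      moreover have "a2 j = C * a j + S * b j \<and> b2 j = S * a j - C * b j" for j
      proof -
        have xx: "x2 j = - x j" using True by blast
        have e1: "a2 j * N = (a i * a2 i - b i * b2 i) * a j + (b i * a2 i + a i * b2 i) * b j"
          using xx G[of j i] unfolding x2_def x_def N2 by algebra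
        have e2: "b2 j * N = (b i * a2 i + a i * b2 i) * a j - (a i * a2 i - b i * b2 i) * b j"
          using xx G[of j i] unfolding x2_def x_def N2 by algebra
        have f1: "a2 j = ((a i * a2 i - b i * b2 i) * a j + (b i * a2 i + a i * b2 i) * b j) / N"
          using e1 Npos by (simp add: eq_divide_eq)
        have f2: "b2 j = ((b i * a2 i + a i * b2 i) * a j - (a i * a2 i - b i * b2 i) * b j) / N"
          using e2 Npos by (simp add: eq_divide_eq)
        show ?thesis unfolding f1 f2 C_def S_def using Npos by (simp add: field_simps)
      qed
      ultimately show ?thesis by blast
    next
      case F2: False
      obtain j1 where j1: "x2 j1 \<noteq> x j1" using F1 by blast
      obtain j2 where j2: "x2 j2 \<noteq> - x j2" using F2 by blast
      have h1: "x2 j1 = - x j1" "x j1 \<noteq> 0" using pm[of j1] j1 by auto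
      have h2: "x2 j2 = x j2" "x j2 \<noteq> 0" using pm[of j2] j2 by auto
      have "x j1 * x j2 = x2 j1 * x2 j2" using dot[of j1 j2] dot2[of j1 j2] by simp
      then have "x j1 * x j2 = 0" using h1 h2 by simp
      then show ?thesis using h1 h2 by simp
    qed
  qed
qed
lemma axsum: "(\<Sum>i\<in>UNIV. axis j (1::real) $ i * f i) = f j"
proof -
  have "\<And>i. axis j (1::real) $ i * f i = (if i = j then f i else 0)" by (simp add: axis_def)
  then show ?thesis by simp
qed
lemma axsum2: "(\<Sum>i\<in>UNIV. (axis j (1::real) + axis k 1) $ i * f i) = f j + f k"
  by (simp only: vector_add_component distrib_right sum.distrib axsum)
lemma negsum: "(\<Sum>i\<in>UNIV. (-x) $ i * f i) = - (\<Sum>i\<in>UNIV. x $ i * (f i::real))"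
  by (simp add: sum_negf)
lemma polar: 
  assumes "(P::real) + R = P2 + R2" "P*R - Q^2 = P2*R2 - Q2^2"
  shows "(P - R)^2 + (2*Q)^2 = (P2 - R2)^2 + (2*Q2)^2"
  using assms by algebra
lemma twoeq:
  assumes "(1 + (P::real)) * (1 + R) - Q^2 = (1 + P2) * (1 + R2) - Q2^2"
     "(1 - (P::real)) * (1 - R) - Q^2 = (1 - P2) * (1 - R2) - Q2^2"
  shows "P + R = P2 + R2 \<and> P*R - Q^2 = P2*R2 - Q2^2"
  using assms by (auto simp: algebra_simps)

theorem mainTheorem4:
  fixes A :: "real^'n^'n" and b :: "real^'n"
    and As Bs :: "'n \<Rightarrow> real^2^2"
  assumes "transpose A = A"
    and "\<And>j. transpose (As j) = As j"
    and "\<And>j. transpose (Bs j) = Bs j"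
    and "\<And>x::real^'n. x \<bullet> (A *v x) + b \<bullet> x + 1
            = det (mat 1 + (\<Sum>j\<in>UNIV. x $ j *\<^sub>R As j))"
    and "\<And>x::real^'n. x \<bullet> (A *v x) + b \<bullet> x + 1
            = det (mat 1 + (\<Sum>j\<in>UNIV. x $ j *\<^sub>R Bs j))"
  shows "\<exists>V::real^2^2. orthogonal_matrix V \<and> (\<forall>j. transpose V ** As j ** V = Bs j)"
proof -
  define L where "L f x = (\<Sum>i\<in>UNIV. (x::real^'n) $ i * f i)" for f x
  define p where "p j = As j $1$1" for j
  define q where "q j = As j $1$2" for j
  define r where "r j = As j $2$2" for j
  define p2 where "p2 j = Bs j $1$1" for j
  define q2 where "q2 j = Bs j $1$2" for j
  define r2 where "r2 j = Bs j $2$2" for j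
  have E: "(1 + L p x) * (1 + L r x) - (L q x)^2 = (1 + L p2 x) * (1 + L r2 x) - (L q2 x)^2" for x
    using assms(4)[of x] assms(5)[of x] detform[of As x, OF assms(2)] detform[of Bs x, OF assms(3)]
    unfolding L_def p_def q_def r_def p2_def q2_def r2_def by simp
  have Lneg: "L f (-x) = - L f x" for f x unfolding L_def by (rule negsum)
  have TD: "L p x + L r x = L p2 x + L r2 x \<and> L p x * L r x - (L q x)^2 = L p2 x * L r2 x - (L q2 x)^2" for x
    using twoeq[OF E[of x]] E[of "-x"] unfolding Lneg by simp
  have tr: "p j + r j = p2 j + r2 j" for j
    using TD[of "axis j 1"] unfolding L_def axsum by simp
  define a where "a j = p j - r j" for j
  define c where "c j = 2 * q j" for j
  define a2 where "a2 j = p2 j - r2 j" for j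
  define c2 where "c2 j = 2 * q2 j" for j
  have La: "L a x = L p x - L r x" "L a2 x = L p2 x - L r2 x" "L c x = 2 * L q x" "L c2 x = 2 * L q2 x" for x
    unfolding L_def a_def a2_def c_def c2_def by (simp_all add: algebra_simps sum_subtractf sum_distrib_left)
  have GG: "(L a x)^2 + (L c x)^2 = (L a2 x)^2 + (L c2 x)^2" for x
    unfolding La using TD[of x] polar by blast
  have Gr: "a j * a k + c j * c k = a2 j * a2 k + c2 j * c2 k" for j k
  proof -
    have e1: "(a j + a k)^2 + (c j + c k)^2 = (a2 j + a2 k)^2 + (c2 j + c2 k)^2"
      using GG[of "axis j 1 + axis k 1"] unfolding L_def axsum2 .
    have e2: "(a j)^2 + (c j)^2 = (a2 j)^2 + (c2 j)^2"
      using GG[of "axis j 1"] unfolding L_def axsum .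
    have e3: "(a k)^2 + (c k)^2 = (a2 k)^2 + (c2 k)^2"
      using GG[of "axis k 1"] unfolding L_def axsum .
    show ?thesis using e1 e2 e3 by algebra
  qed
  obtain C S where CS: "C^2 + S^2 = 1" and
    cases: "(\<forall>j. a2 j = C * a j - S * c j \<and> c2 j = S * a j + C * c j) \<or>
      (\<forall>j. a2 j = C * a j + S * c j \<and> c2 j = S * a j - C * c j)"
    using gram2[of a c a2 c2, OF Gr] by blast
  obtain t where t: "C = cos t" "S = sin t" using sincos_total_2pi[OF CS] by metis
  have cd: "cos t = (cos (t/2))^2 - (sin (t/2))^2" using cos_double[of "t/2"] by simp
  have sd: "sin t = 2 * sin (t/2) * cos (t/2)" using sin_double[of "t/2"] by simp
  from cases show ?thesis
  proof
    assume R: "\<forall>j. a2 j = C * a j - S * c j \<and> c2 j = S * a j + C * c j"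
    define u where "u = cos (t/2)"
    define w where "w = - sin (t/2)"
    have uw: "u^2 + w^2 = 1" unfolding u_def w_def by (simp add: sin_cos_squared_add3 add.commute)
    show ?thesis
    proof (intro exI conjI allI)
      show "orthogonal_matrix (vector[vector[u,-w],vector[w,u]] :: real^2^2)" by (rule orth1[OF uw])
      fix j
      show "transpose (vector[vector[u,-w],vector[w,u]]) ** As j ** (vector[vector[u,-w],vector[w,u]]) = Bs j"
      proof (rule rotconj[OF assms(2) assms(3) uw])
        show "Bs j $ 1 $ 1 + Bs j $ 2 $ 2 = As j $ 1 $ 1 + As j $ 2 $ 2"
          using tr[of j] unfolding p_def r_def p2_def r2_def by simp
        show "Bs j $ 1 $ 1 - Bs j $ 2 $ 2 = (u^2-w^2)*(As j $ 1 $ 1 - As j $ 2 $ 2) + 2*u*w*(2*(As j $ 1 $ 2))"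
          using R[rule_format, of j] unfolding a_def a2_def c_def c2_def p_def q_def r_def p2_def r2_def q2_def t cd sd u_def w_def
          by (simp add: algebra_simps)
        show "2*(Bs j $ 1 $ 2) = -2*u*w*(As j $ 1 $ 1 - As j $ 2 $ 2) + (u^2-w^2)*(2*(As j $ 1 $ 2))"
          using R[rule_format, of j] unfolding a_def a2_def c_def c2_def p_def q_def r_def p2_def r2_def q2_def t cd sd u_def w_def
          by (simp add: algebra_simps)
      qed
    qed
  next
    assume R: "\<forall>j. a2 j = C * a j + S * c j \<and> c2 j = S * a j - C * c j"
    define u where "u = cos (t/2)"
    define w where "w = sin (t/2)"
    have uw: "u^2 + w^2 = 1" unfolding u_def w_def by (simp add: sin_cos_squared_add3 add.commute)
    show ?thesis
    proof (intro exI conjI allI)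
      show "orthogonal_matrix (vector[vector[u,w],vector[w,-u]] :: real^2^2)" by (rule orth2[OF uw])
      fix j
      show "transpose (vector[vector[u,w],vector[w,-u]]) ** As j ** (vector[vector[u,w],vector[w,-u]]) = Bs j"
      proof (rule refconj[OF assms(2) assms(3) uw])
        show "Bs j $ 1 $ 1 + Bs j $ 2 $ 2 = As j $ 1 $ 1 + As j $ 2 $ 2"
          using tr[of j] unfolding p_def r_def p2_def r2_def by simp
        show "Bs j $ 1 $ 1 - Bs j $ 2 $ 2 = (u^2-w^2)*(As j $ 1 $ 1 - As j $ 2 $ 2) + 2*u*w*(2*(As j $ 1 $ 2))"
          using R[rule_format, of j] unfolding a_def a2_def c_def c2_def p_def q_def r_def p2_def r2_def q2_def t cd sd u_def w_def
          by (simp add: algebra_simps)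
        show "2*(Bs j $ 1 $ 2) = 2*u*w*(As j $ 1 $ 1 - As j $ 2 $ 2) - (u^2-w^2)*(2*(As j $ 1 $ 2))"
          using R[rule_format, of j] unfolding a_def a2_def c_def c2_def p_def q_def r_def p2_def r2_def q2_def t cd sd u_def w_def
          by (simp add: algebra_simps)
      qed
    qed
  qed
qed

end
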